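(* Consider the spacetime $\mathbb{R}\times\mathbb{R}^3$ with coordinates $(t,x^1,x^2,x^3)$ and metric of signature $(-,+,+,+)$ $$ds^2=-\alpha^2\,dt^2+\delta_{ij}\,(dx^i-\beta^i dt)(dx^j-\beta^j dt),$$ with lapse $\alpha\equiv 1$, flat time-independent spatial metric $\gamma_{ij}=\delta_{ij}$ on every slice $t=\text{const}$, and irrotational shift given by a smooth scalar potential $\Phi(t,x)$ through $\beta_i=-\partial_i\Phi$ (i.e. $\boldsymbol{\beta}^\flat=-d\Phi$ on each slice). Then the stress–energy tensor $T^\mu{}_\nu=G^\mu{}_\nu/\kappa$ of this spacetime is of Hawking–Ellis Type I at every point.
   Context: $G^\mu{}_\nu$ is the mixed Einstein tensor of the metric and $\kappa>0$ is Einstein's coupling constant (zero cosmological constant). A symmetric tensor $T_{\mu\nu}$ at a point, viewed as the linear map $T^\mu{}_\nu$, is of Hawking–Ellis Type I if $T^\mu{}_\nu$ has four real eigenvalues and admits a real timelike eigenvector, equivalently there is an orthonormal frame in which $T^{\hat\mu}{}_{\hat\nu}=\mathrm{diag}(-\varrho,p_1,p_2,p_3)$ with all entries real. *)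

theory Defs
  imports "HOL-Analysis.Analysis"
begin

text \<open>Spacetime points are vectors in real^4; coordinate index 0 is t, indices 1,2,3 are x^1,x^2,x^3.
  Tensor components are indexed by the 4-element type 4.\<close>

type_synonym point = "real^4"
type_synonym idx = 4

definition pd :: "idx \<Rightarrow> (point \<Rightarrow> real) \<Rightarrow> point \<Rightarrow> real" where
  "pd i f p = deriv (\<lambda>s. f (p + s *\<^sub>R axis i 1)) 0"

fun iter_pd :: "idx list \<Rightarrow> (point \<Rightarrow> real) \<Rightarrow> point \<Rightarrow> real" where
  "iter_pd [] f = f"
| "iter_pd (i # is) f = pd i (iter_pd is f)"

definition smooth :: "(point \<Rightarrow> real) \<Rightarrow> bool" where
  "smooth f \<longleftrightarrow> (\<forall>is. (iter_pd is f) differentiable_on UNIV)"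

text \<open>3+1 metric with lapse alpha, shift beta (components beta_k for spatial k, lowered
  with the flat spatial metric delta) and flat spatial metric gamma_ij = delta_ij:
  ds^2 = -alpha^2 dt^2 + delta_ij (dx^i - beta^i dt)(dx^j - beta^j dt).\<close>
definition adm_flat_metric :: "(point \<Rightarrow> real) \<Rightarrow> (point \<Rightarrow> idx \<Rightarrow> real) \<Rightarrow> point \<Rightarrow> real^4^4" where
  "adm_flat_metric \<alpha> \<beta> p = (\<chi> \<mu> \<nu>.
     if \<mu> = 0 \<and> \<nu> = 0 then - (\<alpha> p)\<^sup>2 + (\<Sum>k\<in>UNIV - {0}. (\<beta> p k)\<^sup>2)
     else if \<mu> = 0 then - \<beta> p \<nu>
     else if \<nu> = 0 then - \<beta> p \<mu>
     else if \<mu> = \<nu> then 1 else 0)"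

definition inv_metric :: "(point \<Rightarrow> real^4^4) \<Rightarrow> point \<Rightarrow> real^4^4" where
  "inv_metric g p = matrix_inv (g p)"

definition christoffel :: "(point \<Rightarrow> real^4^4) \<Rightarrow> point \<Rightarrow> idx \<Rightarrow> idx \<Rightarrow> idx \<Rightarrow> real" where
  "christoffel g p l m n = (1/2) * (\<Sum>s\<in>UNIV. inv_metric g p $ l $ s *
      (pd m (\<lambda>q. g q $ s $ n) p + pd n (\<lambda>q. g q $ s $ m) p - pd s (\<lambda>q. g q $ m $ n) p))"

definition riemann :: "(point \<Rightarrow> real^4^4) \<Rightarrow> point \<Rightarrow> idx \<Rightarrow> idx \<Rightarrow> idx \<Rightarrow> idx \<Rightarrow> real" where
  "riemann g p r s m n =
     pd m (\<lambda>q. christoffel g q r n s) p - pd n (\<lambda>q. christoffel g q r m s) p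
     + (\<Sum>l\<in>UNIV. christoffel g p r m l * christoffel g p l n s
                 - christoffel g p r n l * christoffel g p l m s)"

definition ricci :: "(point \<Rightarrow> real^4^4) \<Rightarrow> point \<Rightarrow> idx \<Rightarrow> idx \<Rightarrow> real" where
  "ricci g p s n = (\<Sum>r\<in>UNIV. riemann g p r s r n)"

definition ricci_scalar :: "(point \<Rightarrow> real^4^4) \<Rightarrow> point \<Rightarrow> real" where
  "ricci_scalar g p = (\<Sum>s\<in>UNIV. \<Sum>n\<in>UNIV. inv_metric g p $ s $ n * ricci g p s n)"

definition einstein :: "(point \<Rightarrow> real^4^4) \<Rightarrow> point \<Rightarrow> real^4^4" where
  "einstein g p = (\<chi> m n. ricci g p m n - (1/2) * ricci_scalar g p * g p $ m $ n)"

definition einstein_mixed :: "(point \<Rightarrow> real^4^4) \<Rightarrow> point \<Rightarrow> real^4^4" where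
  "einstein_mixed g p = inv_metric g p ** einstein g p"

definition eta :: "idx \<Rightarrow> idx \<Rightarrow> real" where
  "eta a b = (if a = b then (if a = 0 then -1 else 1) else 0)"

text \<open>Hawking-Ellis type I for the mixed tensor T (T $ mu $ nu = T^mu_nu) w.r.t. metric matrix gm:
  there is an orthonormal frame (columns e_a of E, e_0 timelike) in which
  T^a_b = diag(-rho, p1, p2, p3), all real.\<close>
definition hawking_ellis_type_I :: "real^4^4 \<Rightarrow> real^4^4 \<Rightarrow> bool" where
  "hawking_ellis_type_I gm T \<longleftrightarrow>
     (\<exists>E :: real^4^4. \<exists>ev :: idx \<Rightarrow> real.
        (\<forall>a b. (\<Sum>m\<in>UNIV. \<Sum>n\<in>UNIV. gm $ m $ n * E $ m $ a * E $ n $ b) = eta a b) \<and>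
        (\<forall>a. T *v column a E = ev a *\<^sub>R column a E))"

end

theory Submission
  imports Defs
begin

definition good :: "(point \<Rightarrow> real) \<Rightarrow> bool" where
  "good f \<longleftrightarrow> (\<forall>x. f differentiable (at x))"

lemma line_deriv_gen:
  fixes f :: "point \<Rightarrow> real"
  assumes "(f has_derivative f') (at (x + s *\<^sub>R v))"
  shows "((\<lambda>t. f (x + t *\<^sub>R v)) has_real_derivative f' v) (at s)"
proof -
  have l: "((\<lambda>t. x + t *\<^sub>R v) has_derivative (\<lambda>t. t *\<^sub>R v)) (at s)"
    by (auto intro!: derivative_eq_intros)
  have "((\<lambda>t. f (x + t *\<^sub>R v)) has_derivative (\<lambda>t. f' (t *\<^sub>R v))) (at s)"
    using diff_chain_at[OF l assms] by (simp add: o_def)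
  moreover have "linear f'" using assms has_derivative_linear by blast
  ultimately have "((\<lambda>t. f (x + t *\<^sub>R v)) has_derivative (\<lambda>t. t * f' v)) (at s)"
    by (simp add: linear_scale)
  moreover have "(\<lambda>t. t * f' v) = (*) (f' v)" by (rule ext) (simp add: mult.commute)
  ultimately show ?thesis unfolding has_field_derivative_def by simp
qed

lemma line_deriv:
  fixes f :: "point \<Rightarrow> real"
  assumes "f differentiable (at (x + s *\<^sub>R axis k 1))"
  shows "((\<lambda>t. f (x + t *\<^sub>R axis k 1)) has_real_derivative pd k f (x + s *\<^sub>R axis k 1)) (at s)"
proof -
  obtain f' where f': "(f has_derivative f') (at (x + s *\<^sub>R axis k 1))"
    using assms unfolding differentiable_def by blast
  have a: "((\<lambda>t. f (x + t *\<^sub>R axis k 1)) has_real_derivative f' (axis k 1)) (at s)"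
    by (rule line_deriv_gen[OF f'])
  have "((\<lambda>t. f ((x + s *\<^sub>R axis k 1) + t *\<^sub>R axis k 1)) has_real_derivative f' (axis k 1)) (at 0)"
    by (rule line_deriv_gen) (use f' in simp)
  then have "pd k f (x + s *\<^sub>R axis k 1) = f' (axis k 1)"
    unfolding pd_def by (rule DERIV_imp_deriv)
  with a show ?thesis by simp
qed

lemma line_deriv0:
  fixes f :: "point \<Rightarrow> real"
  assumes "good f"
  shows "((\<lambda>t. f (x + t *\<^sub>R axis k 1)) has_real_derivative pd k f x) (at 0)"
  using line_deriv[of f x 0 k] assms unfolding good_def by simp

lemma pd_eqI:
  assumes "((\<lambda>t. f (x + t *\<^sub>R axis k 1)) has_real_derivative D) (at 0)"
  shows "pd k f x = D"
  unfolding pd_def using assms by (rule DERIV_imp_deriv)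

lemma good_const[simp]: "good (\<lambda>q. c)" unfolding good_def by simp
lemma good_add[simp]: "good f \<Longrightarrow> good g \<Longrightarrow> good (\<lambda>q. f q + g q)"
  unfolding good_def by auto
lemma good_diff[simp]: "good f \<Longrightarrow> good g \<Longrightarrow> good (\<lambda>q. f q - g q)"
  unfolding good_def by auto
lemma good_mult[simp]: "good f \<Longrightarrow> good g \<Longrightarrow> good (\<lambda>q. f q * g q)"
  unfolding good_def by auto
lemma good_minus[simp]: "good f \<Longrightarrow> good (\<lambda>q. - f q)"
  unfolding good_def by auto

lemma pd_const[simp]: "pd k (\<lambda>q. c) = (\<lambda>q. 0)"
  by (rule ext, rule pd_eqI) simp
lemma pd_add[simp]: "good f \<Longrightarrow> good g \<Longrightarrow> pd k (\<lambda>q. f q + g q) = (\<lambda>q. pd k f q + pd k g q)"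
  by (rule ext, rule pd_eqI, intro DERIV_add line_deriv0)
lemma pd_diff[simp]: "good f \<Longrightarrow> good g \<Longrightarrow> pd k (\<lambda>q. f q - g q) = (\<lambda>q. pd k f q - pd k g q)"
  by (rule ext, rule pd_eqI, intro DERIV_diff line_deriv0)
lemma pd_minus[simp]: "good f \<Longrightarrow> pd k (\<lambda>q. - f q) = (\<lambda>q. - pd k f q)"
  by (rule ext, rule pd_eqI, intro DERIV_minus line_deriv0)
lemma pd_mult[simp]: "good f \<Longrightarrow> good g \<Longrightarrow> pd k (\<lambda>q. f q * g q) = (\<lambda>q. pd k f q * g q + f q * pd k g q)"
  by (rule ext, rule pd_eqI) (auto intro!: derivative_eq_intros line_deriv0)

lemma mixed_mvt:
  fixes f :: "point \<Rightarrow> real"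
  assumes gf: "good f" and gi: "good (pd i f)" and h: "h > 0"
  shows "\<exists>\<sigma> \<tau>. 0 < \<sigma> \<and> \<sigma> < h \<and> 0 < \<tau> \<and> \<tau> < h \<and>
     f (p + h *\<^sub>R axis j 1 + h *\<^sub>R axis i 1) - f (p + h *\<^sub>R axis i 1) - f (p + h *\<^sub>R axis j 1) + f p
       = h * h * pd j (pd i f) (p + \<sigma> *\<^sub>R axis i 1 + \<tau> *\<^sub>R axis j 1)"
proof -
  define \<phi> where "\<phi> s = f (p + h *\<^sub>R axis j 1 + s *\<^sub>R axis i 1) - f (p + s *\<^sub>R axis i 1)" for s
  have d\<phi>: "(\<phi> has_real_derivative (pd i f (p + h *\<^sub>R axis j 1 + s *\<^sub>R axis i 1) - pd i f (p + s *\<^sub>R axis i 1))) (at s)" for s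
    unfolding \<phi>_def using gf unfolding good_def by (intro DERIV_diff line_deriv) auto
  obtain \<sigma> where \<sigma>: "0 < \<sigma>" "\<sigma> < h" "\<phi> h - \<phi> 0 = (h - 0) * (pd i f (p + h *\<^sub>R axis j 1 + \<sigma> *\<^sub>R axis i 1) - pd i f (p + \<sigma> *\<^sub>R axis i 1))"
    using MVT2[OF h, of \<phi> "\<lambda>s. pd i f (p + h *\<^sub>R axis j 1 + s *\<^sub>R axis i 1) - pd i f (p + s *\<^sub>R axis i 1)"] d\<phi> by blast
  define \<psi> where "\<psi> t = pd i f (p + \<sigma> *\<^sub>R axis i 1 + t *\<^sub>R axis j 1)" for t
  have d\<psi>: "(\<psi> has_real_derivative pd j (pd i f) (p + \<sigma> *\<^sub>R axis i 1 + t *\<^sub>R axis j 1)) (at t)" for t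
    unfolding \<psi>_def using gi unfolding good_def by (intro line_deriv) auto
  obtain \<tau> where \<tau>: "0 < \<tau>" "\<tau> < h" "\<psi> h - \<psi> 0 = (h - 0) * pd j (pd i f) (p + \<sigma> *\<^sub>R axis i 1 + \<tau> *\<^sub>R axis j 1)"
    using MVT2[OF h, of \<psi> "\<lambda>t. pd j (pd i f) (p + \<sigma> *\<^sub>R axis i 1 + t *\<^sub>R axis j 1)"] d\<psi> by blast
  have "\<psi> h = pd i f (p + h *\<^sub>R axis j 1 + \<sigma> *\<^sub>R axis i 1)" unfolding \<psi>_def by (simp add: ac_simps)
  moreover have "\<psi> 0 = pd i f (p + \<sigma> *\<^sub>R axis i 1)" unfolding \<psi>_def by simp
  ultimately have "\<phi> h - \<phi> 0 = h * h * pd j (pd i f) (p + \<sigma> *\<^sub>R axis i 1 + \<tau> *\<^sub>R axis j 1)"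
    using \<sigma>(3) \<tau>(3) by simp
  moreover have "\<phi> h - \<phi> 0 = f (p + h *\<^sub>R axis j 1 + h *\<^sub>R axis i 1) - f (p + h *\<^sub>R axis i 1) - f (p + h *\<^sub>R axis j 1) + f p"
    unfolding \<phi>_def by simp
  ultimately show ?thesis using \<sigma> \<tau> by metis
qed

lemma good_cont: "good f \<Longrightarrow> continuous (at x) f"
  unfolding good_def using differentiable_imp_continuous_within by blast

lemma schwarz:
  fixes f :: "point \<Rightarrow> real"
  assumes gf: "good f" and gi: "good (pd i f)" and gj: "good (pd j f)"
    and gij: "good (pd i (pd j f))" and gji: "good (pd j (pd i f))"
  shows "pd i (pd j f) p = pd j (pd i f) p"
proof (rule ccontr)
  assume ne: "pd i (pd j f) p \<noteq> pd j (pd i f) p"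
  define F1 where "F1 = pd j (pd i f)"
  define F2 where "F2 = pd i (pd j f)"
  define e where "e = \<bar>F1 p - F2 p\<bar> / 2"
  have e: "e > 0" using ne unfolding e_def F1_def F2_def by simp
  obtain d1 where d1: "d1 > 0" "\<And>y. dist y p < d1 \<Longrightarrow> dist (F1 y) (F1 p) < e"
    using good_cont[OF gji, of p] e unfolding continuous_at_eps_delta F1_def by blast
  obtain d2 where d2: "d2 > 0" "\<And>y. dist y p < d2 \<Longrightarrow> dist (F2 y) (F2 p) < e"
    using good_cont[OF gij, of p] e unfolding continuous_at_eps_delta F2_def by blast
  define h where "h = min d1 d2 / 4"
  have h: "h > 0" using d1 d2 unfolding h_def by simp
  obtain s1 t1 where st1: "0 < s1" "s1 < h" "0 < t1" "t1 < h"
    "f (p + h *\<^sub>R axis j 1 + h *\<^sub>R axis i 1) - f (p + h *\<^sub>R axis i 1) - f (p + h *\<^sub>R axis j 1) + f p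
       = h * h * F1 (p + s1 *\<^sub>R axis i 1 + t1 *\<^sub>R axis j 1)"
    using mixed_mvt[OF gf gi h, of p j] unfolding F1_def by blast
  obtain s2 t2 where st2: "0 < s2" "s2 < h" "0 < t2" "t2 < h"
    "f (p + h *\<^sub>R axis i 1 + h *\<^sub>R axis j 1) - f (p + h *\<^sub>R axis j 1) - f (p + h *\<^sub>R axis i 1) + f p
       = h * h * F2 (p + s2 *\<^sub>R axis j 1 + t2 *\<^sub>R axis i 1)"
    using mixed_mvt[OF gf gj h, of p i] unfolding F2_def by blast
  have "f (p + h *\<^sub>R axis j 1 + h *\<^sub>R axis i 1) = f (p + h *\<^sub>R axis i 1 + h *\<^sub>R axis j 1)" by (simp add: ac_simps)
  then have "h * h * F1 (p + s1 *\<^sub>R axis i 1 + t1 *\<^sub>R axis j 1) = h * h * F2 (p + s2 *\<^sub>R axis j 1 + t2 *\<^sub>R axis i 1)"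
    using st1(5) st2(5) by linarith
  then have eq: "F1 (p + s1 *\<^sub>R axis i 1 + t1 *\<^sub>R axis j 1) = F2 (p + s2 *\<^sub>R axis j 1 + t2 *\<^sub>R axis i 1)"
    using h by simp
  have aux: "\<And>x y a b::real. \<bar>x - a\<bar> < \<bar>a - b\<bar> / 2 \<Longrightarrow> \<bar>y - b\<bar> < \<bar>a - b\<bar> / 2 \<Longrightarrow> x = y \<Longrightarrow> False"
    by (simp add: abs_if split: if_splits)
  have nb: "dist (p + a *\<^sub>R axis i 1 + b *\<^sub>R axis j 1) p < min d1 d2" if "0 < a" "a < h" "0 < b" "b < h" for a b and i j :: idx
  proof -
    have "dist (p + a *\<^sub>R axis i 1 + b *\<^sub>R axis j 1) p = norm (a *\<^sub>R axis i 1 + b *\<^sub>R axis j 1 :: point)"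
      by (simp add: dist_norm)
    also have "\<dots> \<le> norm (a *\<^sub>R (axis i 1 :: point)) + norm (b *\<^sub>R (axis j 1 :: point))" by (rule norm_triangle_ineq)
    also have "\<dots> = a + b" using that by simp
    also have "\<dots> < min d1 d2" using that unfolding h_def by simp
    finally show ?thesis .
  qed
  have "dist (F1 (p + s1 *\<^sub>R axis i 1 + t1 *\<^sub>R axis j 1)) (F1 p) < e"
    using d1(2) nb[OF st1(1-4), of i j] by simp
  moreover have "dist (F2 (p + s2 *\<^sub>R axis j 1 + t2 *\<^sub>R axis i 1)) (F2 p) < e"
    using d2(2) nb[OF st2(1-4), of j i] by simp
  ultimately show False using eq unfolding e_def dist_real_def
    by (metis aux)
qed

lemma smooth_good: "smooth f \<Longrightarrow> good (iter_pd is f)"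
  unfolding smooth_def good_def by (simp add: differentiable_on_eq_differentiable_at)

definition gm :: "(point \<Rightarrow> real) \<Rightarrow> point \<Rightarrow> real^4^4" where
  "gm \<Phi> = adm_flat_metric (\<lambda>q. 1) (\<lambda>q k. - pd k \<Phi> q)"

definition ginv :: "(point \<Rightarrow> real) \<Rightarrow> point \<Rightarrow> real^4^4" where
  "ginv \<Phi> q = (\<chi> \<mu> \<nu>. if \<mu> = 0 \<and> \<nu> = 0 then -1 else if \<mu> = 0 then pd \<nu> \<Phi> q
     else if \<nu> = 0 then pd \<mu> \<Phi> q else (if \<mu> = \<nu> then 1 else 0) - pd \<mu> \<Phi> q * pd \<nu> \<Phi> q)"

lemma sum_UNIV_minus0: "sum f (UNIV - {0::4}) = f 1 + f 2 + f 3"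
proof -
  have "UNIV - {0::4} = {1,2,3}" using UNIV_4 by auto
  then show ?thesis by (simp add: ac_simps)
qed

lemma four_eq: "(4::4) = 0" by simp

lemma matrix_inv_eqI:
  fixes A B :: "real^'n^'n"
  assumes "A ** B = mat 1" "B ** A = mat 1"
  shows "matrix_inv A = B"
proof -
  have ex: "\<exists>A'. A ** A' = mat 1 \<and> A' ** A = mat 1" using assms by blast
  then have "A ** matrix_inv A = mat 1 \<and> matrix_inv A ** A = mat 1"
    unfolding matrix_inv_def by (rule someI_ex)
  then have i: "matrix_inv A ** A = mat 1" by blast
  have "matrix_inv A = matrix_inv A ** (A ** B)" using assms by (simp add: matrix_mul_rid)
  also have "\<dots> = (matrix_inv A ** A) ** B" by (simp add: matrix_mul_assoc)
  also have "\<dots> = B" using i by (simp add: matrix_mul_lid)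
  finally show ?thesis .
qed

lemma inv_gm: "inv_metric (gm \<Phi>) q = ginv \<Phi> q"
  unfolding inv_metric_def
  apply (rule matrix_inv_eqI)
   apply (simp_all add: vec_eq_iff matrix_matrix_mult_def mat_def gm_def ginv_def adm_flat_metric_def forall_4 sum_4 sum_UNIV_minus0)
   apply (simp_all add: algebra_simps power2_eq_square)
  done

definition CH :: "(point \<Rightarrow> real) \<Rightarrow> idx \<Rightarrow> idx \<Rightarrow> idx \<Rightarrow> point \<Rightarrow> real" where
  "CH \<Phi> l m n = (\<lambda>q.
   (if l = 0 then
     (if m = 0 \<and> n = 0 then - (\<Sum>k\<in>{1,2,3}. \<Sum>j\<in>{1,2,3}. pd k \<Phi> q * pd j \<Phi> q * pd k (pd j \<Phi>) q)
      else if m = 0 then - (\<Sum>k\<in>{1,2,3}. pd k \<Phi> q * pd n (pd k \<Phi>) q)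
      else if n = 0 then - (\<Sum>k\<in>{1,2,3}. pd k \<Phi> q * pd m (pd k \<Phi>) q)
      else - pd m (pd n \<Phi>) q)
    else
     (if m = 0 \<and> n = 0 then pd 0 (pd l \<Phi>) q - (\<Sum>k\<in>{1,2,3}. pd k \<Phi> q * pd l (pd k \<Phi>) q)
          + pd l \<Phi> q * (\<Sum>k\<in>{1,2,3}. \<Sum>j\<in>{1,2,3}. pd k \<Phi> q * pd j \<Phi> q * pd k (pd j \<Phi>) q)
      else if m = 0 then pd l \<Phi> q * (\<Sum>k\<in>{1,2,3}. pd k \<Phi> q * pd n (pd k \<Phi>) q)
      else if n = 0 then pd l \<Phi> q * (\<Sum>k\<in>{1,2,3}. pd k \<Phi> q * pd m (pd k \<Phi>) q)
      else pd l \<Phi> q * pd m (pd n \<Phi>) q)))"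

context
  fixes \<Phi> :: "point \<Rightarrow> real"
  assumes sm: "smooth \<Phi>"
begin

lemma g1[simp]: "good \<Phi>" using smooth_good[OF sm, of "[]"] by simp
lemma g2[simp]: "good (pd i \<Phi>)" using smooth_good[OF sm, of "[i]"] by simp
lemma g3[simp]: "good (pd i (pd j \<Phi>))" using smooth_good[OF sm, of "[i,j]"] by simp
lemma g4[simp]: "good (pd i (pd j (pd k \<Phi>)))" using smooth_good[OF sm, of "[i,j,k]"] by simp

lemma S2: "pd i (pd j \<Phi>) = pd j (pd i \<Phi>)"
  by (rule ext, rule schwarz) simp_all
lemma S3: "pd i (pd j (pd k \<Phi>)) = pd j (pd i (pd k \<Phi>))"
  by (rule ext, rule schwarz) simp_all

lemma chr_all: "\<forall>l m n. christoffel (gm \<Phi>) q l m n = CH \<Phi> l m n q"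
  unfolding christoffel_def inv_gm forall_4 four_eq
  by (simp add: CH_def sum_4 four_eq ginv_def gm_def adm_flat_metric_def sum_UNIV_minus0 power2_eq_square S2 S3 algebra_simps)

end

definition RS :: "(point \<Rightarrow> real) \<Rightarrow> point \<Rightarrow> idx \<Rightarrow> idx \<Rightarrow> real" where
  "RS \<Phi> p k j = (\<Sum>l\<in>{1,2,3}. pd l \<Phi> p * pd j (pd k (pd l \<Phi>)) p)
     + pd j (pd k \<Phi>) p * (\<Sum>l\<in>{1,2,3}. pd l (pd l \<Phi>) p) - pd 0 (pd j (pd k \<Phi>)) p"

context
  fixes \<Phi> :: "point \<Rightarrow> real"
  assumes sm: "smooth \<Phi>"
begin

lemma chr_fun: "(\<lambda>q. christoffel (gm \<Phi>) q l m n) = CH \<Phi> l m n"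
  using chr_all[OF sm] by auto

lemma chr_pt: "christoffel (gm \<Phi>) q l m n = CH \<Phi> l m n q"
  using chr_all[OF sm] by auto

lemmas simps = g1[OF sm] g2[OF sm] g3[OF sm] g4[OF sm] S2[OF sm] S3[OF sm]

lemma ric_sp: "\<forall>k j. k \<noteq> 0 \<longrightarrow> j \<noteq> 0 \<longrightarrow> ricci (gm \<Phi>) p k j = RS \<Phi> p k j"
  unfolding forall_4 four_eq ricci_def riemann_def sum_4 chr_fun chr_pt
  by (simp add: CH_def RS_def sum_4 four_eq simps algebra_simps)

lemma ric_0j: "\<forall>j. j \<noteq> 0 \<longrightarrow> ricci (gm \<Phi>) p 0 j = (\<Sum>k\<in>{1,2,3}. pd k \<Phi> p * RS \<Phi> p k j)"
  unfolding forall_4 four_eq ricci_def riemann_def sum_4 chr_fun chr_pt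
  by (simp add: CH_def RS_def sum_4 four_eq simps algebra_simps)

lemma ric_j0: "\<forall>j. j \<noteq> 0 \<longrightarrow> ricci (gm \<Phi>) p j 0 = (\<Sum>k\<in>{1,2,3}. pd k \<Phi> p * RS \<Phi> p k j)"
  unfolding forall_4 four_eq ricci_def riemann_def sum_4 chr_fun chr_pt
  by (simp add: CH_def RS_def sum_4 four_eq simps algebra_simps)

lemma RS_sym: "RS \<Phi> p k j = RS \<Phi> p j k"
  unfolding RS_def by (simp add: simps)

end

definition nvec :: "(point \<Rightarrow> real) \<Rightarrow> point \<Rightarrow> real^4" where
  "nvec \<Phi> p = (\<chi> \<mu>. if \<mu> = 0 then 1 else - pd \<mu> \<Phi> p)"

context
  fixes \<Phi> :: "point \<Rightarrow> real"
  assumes sm: "smooth \<Phi>"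
begin

lemma gm_entry: "gm \<Phi> q $ \<mu> $ \<nu> = (if \<mu> = 0 \<and> \<nu> = 0 then -1 + (pd 1 \<Phi> q * pd 1 \<Phi> q + pd 2 \<Phi> q * pd 2 \<Phi> q + pd 3 \<Phi> q * pd 3 \<Phi> q)
     else if \<mu> = 0 then pd \<nu> \<Phi> q else if \<nu> = 0 then pd \<mu> \<Phi> q else if \<mu> = \<nu> then 1 else 0)"
  by (simp add: gm_def adm_flat_metric_def sum_UNIV_minus0 power2_eq_square)

lemmas ric = ric_sp[OF sm] ric_0j[OF sm] ric_j0[OF sm]

lemma GA: "\<forall>j. j \<noteq> 0 \<longrightarrow> einstein_mixed (gm \<Phi>) p $ 0 $ j = 0"
  unfolding forall_4 four_eq einstein_mixed_def einstein_def inv_gm matrix_matrix_mult_def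
  by (simp add: ric sum_4 four_eq ginv_def gm_entry algebra_simps)

lemma GB: "\<forall>i j. i \<noteq> 0 \<longrightarrow> j \<noteq> 0 \<longrightarrow> einstein_mixed (gm \<Phi>) p $ i $ j = einstein_mixed (gm \<Phi>) p $ j $ i"
  unfolding forall_4 four_eq einstein_mixed_def einstein_def inv_gm matrix_matrix_mult_def
  by (simp add: ric sum_4 four_eq ginv_def gm_entry algebra_simps RS_sym[OF sm, of p 1 2] RS_sym[OF sm, of p 1 3] RS_sym[OF sm, of p 2 3])

lemma GC: "einstein_mixed (gm \<Phi>) p *v nvec \<Phi> p = einstein_mixed (gm \<Phi>) p $ 0 $ 0 *\<^sub>R nvec \<Phi> p"
  unfolding vec_eq_iff forall_4 four_eq einstein_mixed_def einstein_def inv_gm matrix_matrix_mult_def matrix_vector_mult_def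
  by (simp add: ric nvec_def sum_4 four_eq ginv_def gm_entry sum_UNIV_minus0 power2_eq_square RS_sym[OF sm, of p 1 2] RS_sym[OF sm, of p 1 3] RS_sym[OF sm, of p 2 3] algebra_simps add_divide_distrib diff_divide_distrib)

end

lemma symdot:
  fixes N :: "real^'n^'n"
  assumes sym: "transpose N = N"
  shows "a \<bullet> (N *v b) = (N *v a) \<bullet> b"
  by (metis dot_lmul_matrix sym vector_transpose_matrix)

lemma quad_le0:
  fixes a b :: real
  assumes "\<And>t. 2 * t * a + t * t * b \<le> 0" "a \<ge> 0"
  shows "a = 0"
proof (rule ccontr)
  assume "a \<noteq> 0"
  then have a: "a > 0" using assms(2) by simp
  define c where "c = \<bar>b\<bar> + 1"
  have c: "c > 0" unfolding c_def by simp
  have "2 * (a / c) * a + (a / c) * (a / c) * b \<le> 0" by (rule assms(1))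
  moreover have "2 * (a / c) * a + (a / c) * (a / c) * b = a * a * (2 * c + b) / (c * c)"
    using c by (simp add: field_simps)
  moreover have "2 * c + b > 0" unfolding c_def by (simp add: abs_if)
  moreover have "a * a > 0" using a by simp
  moreover have "c * c > 0" using c by simp
  ultimately show False by (metis divide_pos_pos mult_pos_pos not_le)
qed

lemma sym_eig:
  fixes N :: "real^'n^'n"
  assumes sym: "transpose N = N" and W: "subspace W" and ne: "x0 \<in> W" "x0 \<noteq> 0"
    and inv: "\<And>x. x \<in> W \<Longrightarrow> N *v x \<in> W"
  shows "\<exists>x\<in>W. norm x = 1 \<and> N *v x = (x \<bullet> (N *v x)) *\<^sub>R x"
proof -
  define q where "q x = x \<bullet> (N *v x)" for x
  define K where "K = sphere 0 1 \<inter> W"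
  have cK: "compact K" unfolding K_def using closed_subspace[OF W] by (intro compact_Int_closed) auto
  have "x0 /\<^sub>R norm x0 \<in> K" unfolding K_def using ne W by (auto simp: subspace_scale)
  then have neK: "K \<noteq> {}" by blast
  have "continuous_on UNIV (\<lambda>x. N *v x)"
    by (intro linear_continuous_on; simp)
  then have cont: "continuous_on K q" unfolding q_def
    by (intro continuous_intros; auto intro: continuous_on_subset)
  obtain x where x: "x \<in> K" "\<And>y. y \<in> K \<Longrightarrow> q y \<le> q x"
    using continuous_attains_sup[OF cK neK cont] by blast
  define l where "l = q x"
  have xW: "x \<in> W" and nx: "norm x = 1" using x(1) unfolding K_def by auto
  have xx: "x \<bullet> x = 1" using nx by (simp add: norm_eq_1)
  have qs: "q (c *\<^sub>R y) = c * c * q y" for c y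
    unfolding q_def by (simp add: matrix_vector_mult_scaleR)
  have bound: "q y \<le> l * (y \<bullet> y)" if yW: "y \<in> W" for y
  proof (cases "y = 0")
    case True then show ?thesis by (simp add: q_def)
  next
    case False
    let ?z = "(1 / norm y) *\<^sub>R y"
    have "?z \<in> K" unfolding K_def using yW W False by (auto simp: subspace_scale)
    then have "q ?z \<le> l" using x(2) l_def by blast
    then have "(1 / norm y) * (1 / norm y) * q y \<le> l" by (simp add: qs)
    then have "q y \<le> l * (norm y * norm y)" using False by (simp add: field_simps)
    then show ?thesis by (simp add: power2_norm_eq_inner[symmetric] power2_eq_square)
  qed
  define r where "r = N *v x - l *\<^sub>R x"
  have rW: "r \<in> W" unfolding r_def using W xW inv by (simp add: subspace_diff subspace_scale)
  have key: "2 * t * (r \<bullet> r) + t * t * (q r - l * (r \<bullet> r)) \<le> 0" for t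
  proof -
    have "x + t *\<^sub>R r \<in> W" using W xW rW by (simp add: subspace_add subspace_scale)
    then have b: "q (x + t *\<^sub>R r) \<le> l * ((x + t *\<^sub>R r) \<bullet> (x + t *\<^sub>R r))" by (rule bound)
    have e1: "q (x + t *\<^sub>R r) = l + 2 * t * (r \<bullet> (N *v x)) + t * t * q r"
      unfolding q_def l_def using symdot[OF sym, of x r]
      by (simp add: algebra_simps inner_commute)
    have e2: "(x + t *\<^sub>R r) \<bullet> (x + t *\<^sub>R r) = 1 + 2 * t * (x \<bullet> r) + t * t * (r \<bullet> r)"
      using xx by (simp add: algebra_simps inner_commute)
    have e3: "r \<bullet> r = r \<bullet> (N *v x) - l * (x \<bullet> r)"
      unfolding r_def by (simp add: algebra_simps inner_commute)
    have aux: "\<And>l t A Q B R :: real. l + 2*t*A + t*t*Q \<le> l*(1 + 2*t*B + t*t*R) \<Longrightarrow> R = A - l*B \<Longrightarrow> 2*t*R + t*t*(Q - l*R) \<le> 0"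
    proof -
      fix l t A Q B R :: real
      assume h: "l + 2*t*A + t*t*Q \<le> l*(1 + 2*t*B + t*t*R)" and r: "R = A - l*B"
      have "2*t*R + t*t*(Q - l*R) = (l + 2*t*A + t*t*Q) - l*(1 + 2*t*B + t*t*R)"
        unfolding r by (simp add: algebra_simps)
      then show "2*t*R + t*t*(Q - l*R) \<le> 0" using h by linarith
    qed
    show ?thesis using b unfolding e1 e2 by (rule aux) (rule e3)
  qed
  have "r \<bullet> r = 0" by (rule quad_le0[OF key]) simp
  then have "r = 0" by simp
  then have "N *v x = l *\<^sub>R x" unfolding r_def by simp
  then show ?thesis using xW nx l_def q_def by auto
qed

lemma step4:
  fixes N :: "real^4^4"
  assumes sym: "transpose N = N" and fin: "finite S" and cS: "card S < 4"
    and eigS: "\<forall>x\<in>S. \<exists>c. N *v x = c *\<^sub>R x"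
  shows "\<exists>w. (\<forall>x\<in>S. orthogonal x w) \<and> norm w = 1 \<and> N *v w = (w \<bullet> (N *v w)) *\<^sub>R w"
proof -
  define W where "W = {y. \<forall>x\<in>S. orthogonal x y}"
  have sW: "subspace W" unfolding W_def by (rule subspace_orthogonal_to_vectors)
  have dS: "dim S < DIM(real^4)" using dim_le_card'[OF fin] cS by simp
  obtain x0 where x0: "x0 \<noteq> 0" "\<And>y. y \<in> span S \<Longrightarrow> orthogonal x0 y"
    using orthogonal_to_subspace_exists[OF dS] by blast
  have x0W: "x0 \<in> W" unfolding W_def using x0(2) span_base by (auto simp: orthogonal_commute)
  have inv: "N *v y \<in> W" if "y \<in> W" for y
    unfolding W_def
  proof (intro CollectI ballI)
    fix x assume xS: "x \<in> S"
    then obtain c where c: "N *v x = c *\<^sub>R x" using eigS by blast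
    have "x \<bullet> (N *v y) = (N *v x) \<bullet> y" by (rule symdot[OF sym])
    also have "\<dots> = c * (x \<bullet> y)" using c by simp
    also have "\<dots> = 0" using that xS unfolding W_def orthogonal_def by simp
    finally show "orthogonal x (N *v y)" unfolding orthogonal_def .
  qed
  obtain w where "w \<in> W" "norm w = 1" "N *v w = (w \<bullet> (N *v w)) *\<^sub>R w"
    using sym_eig[OF sym sW x0W x0(1) inv] by blast
  then show ?thesis unfolding W_def by blast
qed

context
  fixes \<Phi> :: "point \<Rightarrow> real"
  assumes sm: "smooth \<Phi>"
begin

lemma B_n_left: "(\<Sum>m\<in>UNIV. \<Sum>n\<in>UNIV. gm \<Phi> p $ m $ n * nvec \<Phi> p $ m * y $ n) = - y $ 0"
  by (simp add: sum_4 four_eq gm_entry[OF sm] nvec_def algebra_simps)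

lemma B_n_right: "(\<Sum>m\<in>UNIV. \<Sum>n\<in>UNIV. gm \<Phi> p $ m $ n * x $ m * nvec \<Phi> p $ n) = - x $ 0"
  by (simp add: sum_4 four_eq gm_entry[OF sm] nvec_def algebra_simps)

lemma B_sp: "x $ 0 = 0 \<Longrightarrow> y $ 0 = 0 \<Longrightarrow> (\<Sum>m\<in>UNIV. \<Sum>n\<in>UNIV. gm \<Phi> p $ m $ n * x $ m * y $ n) = x \<bullet> y"
  by (simp add: sum_4 four_eq gm_entry[OF sm] inner_vec_def algebra_simps)

lemma main_pt:
  assumes k: "\<kappa> > 0"
  shows "hawking_ellis_type_I (gm \<Phi> p) ((1 / \<kappa>) *\<^sub>R einstein_mixed (gm \<Phi>) p)"
proof -
  define G where "G = einstein_mixed (gm \<Phi>) p"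
  have GA: "\<And>j. j \<noteq> 0 \<Longrightarrow> G $ 0 $ j = 0" using GA[OF sm, of p] unfolding G_def by blast
  have GB: "\<And>i j. i \<noteq> 0 \<Longrightarrow> j \<noteq> 0 \<Longrightarrow> G $ i $ j = G $ j $ i" using GB[OF sm, of p] unfolding G_def by blast
  have GC: "G *v nvec \<Phi> p = G $ 0 $ 0 *\<^sub>R nvec \<Phi> p" using GC[OF sm, of p] unfolding G_def by blast
  define N where "N = (\<chi> i j. if i = 0 \<or> j = 0 then 0 else G $ i $ j)"
  have symN: "transpose N = N"
    unfolding N_def transpose_def vec_eq_iff using GB by auto
  define e0 where "e0 = (axis 0 1 :: real^4)"
  have Ne0: "N *v e0 = 0 *\<^sub>R e0"
    unfolding N_def e0_def by (simp add: vec_eq_iff matrix_vector_mult_def axis_def sum_4 four_eq)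
  have eig1: "\<forall>x\<in>{e0}. \<exists>c. N *v x = c *\<^sub>R x" using Ne0 by blast
  obtain w1 where w1: "\<forall>x\<in>{e0}. orthogonal x w1" "norm w1 = 1" "N *v w1 = (w1 \<bullet> (N *v w1)) *\<^sub>R w1"
    using step4[OF symN _ _ eig1] by auto
  have eig2: "\<forall>x\<in>{e0, w1}. \<exists>c. N *v x = c *\<^sub>R x" using Ne0 w1(3) by blast
  have c2: "card {e0, w1} < 4" by (simp add: card_insert_if)
  obtain w2 where w2: "\<forall>x\<in>{e0, w1}. orthogonal x w2" "norm w2 = 1" "N *v w2 = (w2 \<bullet> (N *v w2)) *\<^sub>R w2"
    using step4[OF symN _ c2 eig2] by blast
  have eig3: "\<forall>x\<in>{e0, w1, w2}. \<exists>c. N *v x = c *\<^sub>R x" using Ne0 w1(3) w2(3) by blast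
  have c3: "card {e0, w1, w2} < 4" by (simp add: card_insert_if)
  obtain w3 where w3: "\<forall>x\<in>{e0, w1, w2}. orthogonal x w3" "norm w3 = 1" "N *v w3 = (w3 \<bullet> (N *v w3)) *\<^sub>R w3"
    using step4[OF symN _ c3 eig3] by blast
  have z: "w $ 0 = 0" if "orthogonal e0 w" for w
    using that unfolding e0_def orthogonal_def by (simp add: inner_axis')
  have z1: "w1 $ 0 = 0" and z2: "w2 $ 0 = 0" and z3: "w3 $ 0 = 0"
    using z w1(1) w2(1) w3(1) by auto
  have o12: "w1 \<bullet> w2 = 0" and o13: "w1 \<bullet> w3 = 0" and o23: "w2 \<bullet> w3 = 0"
    using w2(1) w3(1) unfolding orthogonal_def by auto
  have n1: "w1 \<bullet> w1 = 1" and n2: "w2 \<bullet> w2 = 1" and n3: "w3 \<bullet> w3 = 1"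
    using w1(2) w2(2) w3(2) by (simp_all add: norm_eq_1)
  have GN: "G *v w = N *v w" if "w $ 0 = 0" for w
    unfolding N_def using that GA
    by (simp add: vec_eq_iff forall_4 four_eq matrix_vector_mult_def sum_4)
  define E :: "real^4^4" where "E = (\<chi> m a. if a = 0 then nvec \<Phi> p $ m else if a = 1 then w1 $ m
      else if a = 2 then w2 $ m else w3 $ m)"
  have col: "column a E = (if a = 0 then nvec \<Phi> p else if a = 1 then w1 else if a = 2 then w2 else w3)" for a
    unfolding E_def column_def by (simp add: vec_eq_iff)
  obtain l1 where l1: "N *v w1 = l1 *\<^sub>R w1" using w1(3) by blast
  obtain l2 where l2: "N *v w2 = l2 *\<^sub>R w2" using w2(3) by blast
  obtain l3 where l3: "N *v w3 = l3 *\<^sub>R w3" using w3(3) by blast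
  define ev :: "4 \<Rightarrow> real" where "ev a = (if a = 0 then G $ 0 $ 0 else if a = 1 then l1
      else if a = 2 then l2 else l3) / \<kappa>" for a
  have sc: "((1 / \<kappa>) *\<^sub>R G) *v v = (1 / \<kappa>) *\<^sub>R (G *v v)" for v
    by (simp add: scaleR_matrix_vector_assoc)
  have n0: "nvec \<Phi> p $ 0 = 1" unfolding nvec_def by simp
  have orth: "\<forall>a b. (\<Sum>m\<in>UNIV. \<Sum>n\<in>UNIV. gm \<Phi> p $ m $ n * E $ m $ a * E $ n $ b) = eta a b"
    unfolding forall_4 four_eq
    by (simp add: E_def eta_def B_n_left B_n_right B_sp z1 z2 z3 n0 o12 o13 o23 n1 n2 n3 inner_commute)
  have eig: "\<forall>a. ((1 / \<kappa>) *\<^sub>R G) *v column a E = ev a *\<^sub>R column a E"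
    unfolding forall_4 four_eq col
    by (simp add: sc GC GN[OF z1] GN[OF z2] GN[OF z3] l1 l2 l3 ev_def)
  show ?thesis unfolding hawking_ellis_type_I_def G_def[symmetric] using orth eig by blast
qed

end

theorem proposition2:
  fixes \<Phi> :: "real^4 \<Rightarrow> real" and \<kappa> :: real
  assumes "\<kappa> > 0"
    and "smooth \<Phi>"
  shows "\<forall>p. hawking_ellis_type_I
           (adm_flat_metric (\<lambda>q. 1) (\<lambda>q k. - pd k \<Phi> q) p)
           ((1 / \<kappa>) *\<^sub>R einstein_mixed (adm_flat_metric (\<lambda>q. 1) (\<lambda>q k. - pd k \<Phi> q)) p)"
  using main_pt[OF assms(2) assms(1)] unfolding gm_def by blast

end
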